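(* The element $\Omega = qABC+q^2A^2+q^{-2}B^2+q^2C^2-qA\alpha-q^{-1}B\beta-qC\gamma$ of $\Delta$ is fixed by every element of ${\rm PSL}_2(\mathbb Z)$ under the action in which $\rho$ sends $A\mapsto B$, $B\mapsto C$, $C\mapsto A$, $\alpha\mapsto\beta$, $\beta\mapsto\gamma$, $\gamma\mapsto\alpha$ and $\sigma$ sends $A\mapsto B$, $B\mapsto A$, $C\mapsto C+\frac{AB-BA}{q-q^{-1}}$, $\alpha\mapsto\beta$, $\beta\mapsto\alpha$, $\gamma\mapsto\gamma$.
   Context: Let $\mathbb F$ be a field and fix a nonzero $q\in\mathbb F$ with $q^4\neq 1$. The universal Askey--Wilson algebra $\Delta$ is the associative $\mathbb F$-algebra with 1 with generators $A,B,C$ subject to the relations that each of $A+\frac{qBC-q^{-1}CB}{q^2-q^{-2}}$, $B+\frac{qCA-q^{-1}AC}{q^2-q^{-2}}$, $C+\frac{qAB-q^{-1}BA}{q^2-q^{-2}}$ is central; $\alpha,\beta,\gamma$ denote these three central elements (in order) each multiplied by $q+q^{-1}$. ${\rm PSL}_2(\mathbb Z)$ is presented by generators $\rho,\sigma$ with relations $\rho^3=\sigma^2=1$, and the stated assignments define an action of ${\rm PSL}_2(\mathbb Z)$ on $\Delta$ by automorphisms. *)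

theory Defs
  imports Main
begin

text \<open>An F-algebra with 1 is modelled as a ring with 1 of type 'r together with a
unital ring homomorphism e from the field F into the centre of 'r (scalar c acts as
multiplication by e c).\<close>

definition alg_embedding :: "('f::field \<Rightarrow> 'r::ring_1) \<Rightarrow> bool" where
  "alg_embedding e \<longleftrightarrow>
     (\<forall>a b. e (a + b) = e a + e b) \<and> (\<forall>a b. e (a * b) = e a * e b) \<and> e 1 = 1 \<and>
     (\<forall>a x. e a * x = x * e a)"

definition central :: "'r::ring_1 \<Rightarrow> bool" where
  "central z \<longleftrightarrow> (\<forall>y. z * y = y * z)"

definition aw_elt :: "('f::field \<Rightarrow> 'r::ring_1) \<Rightarrow> 'f \<Rightarrow> 'r \<Rightarrow> 'r \<Rightarrow> 'r \<Rightarrow> 'r" where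
  "aw_elt e q X Y Z = X + e (inverse (q^2 - inverse q ^ 2)) * (e q * Y * Z - e (inverse q) * Z * Y)"

definition aw_alpha :: "('f::field \<Rightarrow> 'r::ring_1) \<Rightarrow> 'f \<Rightarrow> 'r \<Rightarrow> 'r \<Rightarrow> 'r \<Rightarrow> 'r" where
  "aw_alpha e q A B C = e (q + inverse q) * aw_elt e q A B C"
definition aw_beta :: "('f::field \<Rightarrow> 'r::ring_1) \<Rightarrow> 'f \<Rightarrow> 'r \<Rightarrow> 'r \<Rightarrow> 'r \<Rightarrow> 'r" where
  "aw_beta e q A B C = e (q + inverse q) * aw_elt e q B C A"
definition aw_gamma :: "('f::field \<Rightarrow> 'r::ring_1) \<Rightarrow> 'f \<Rightarrow> 'r \<Rightarrow> 'r \<Rightarrow> 'r \<Rightarrow> 'r" where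
  "aw_gamma e q A B C = e (q + inverse q) * aw_elt e q C A B"

text \<open>(A,B,C) satisfy the defining relations of the universal Askey--Wilson algebra.\<close>
definition aw_relations :: "('f::field \<Rightarrow> 'r::ring_1) \<Rightarrow> 'f \<Rightarrow> 'r \<Rightarrow> 'r \<Rightarrow> 'r \<Rightarrow> bool" where
  "aw_relations e q A B C \<longleftrightarrow>
     central (aw_elt e q A B C) \<and> central (aw_elt e q B C A) \<and> central (aw_elt e q C A B)"

definition aw_Omega :: "('f::field \<Rightarrow> 'r::ring_1) \<Rightarrow> 'f \<Rightarrow> 'r \<Rightarrow> 'r \<Rightarrow> 'r \<Rightarrow> 'r" where
  "aw_Omega e q A B C =
     e q * A * B * C + e (q^2) * A^2 + e (inverse q ^ 2) * B^2 + e (q^2) * C^2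
     - e q * A * aw_alpha e q A B C - e (inverse q) * B * aw_beta e q A B C
     - e q * C * aw_gamma e q A B C"

datatype psl_gen = Rho | Sigma

fun psl_step :: "('f::field \<Rightarrow> 'r::ring_1) \<Rightarrow> 'f \<Rightarrow> psl_gen \<Rightarrow> 'r \<times> 'r \<times> 'r \<Rightarrow> 'r \<times> 'r \<times> 'r" where
  "psl_step e q Rho (A, B, C) = (B, C, A)"
| "psl_step e q Sigma (A, B, C) = (B, A, C + e (inverse (q - inverse q)) * (A * B - B * A))"

text \<open>The images of (A,B,C) under the group element g1 g2 ... gn (word w), as
non-commutative polynomials evaluated at the triple t: the image of X under x w is
the image of X under w evaluated at the images under x.\<close>
fun psl_act :: "('f::field \<Rightarrow> 'r::ring_1) \<Rightarrow> 'f \<Rightarrow> psl_gen list \<Rightarrow> 'r \<times> 'r \<times> 'r \<Rightarrow> 'r \<times> 'r \<times> 'r" where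
  "psl_act e q [] t = t"
| "psl_act e q (x # w) t = psl_act e q w (psl_step e q x t)"

end

theory Submission
  imports Defs
begin

datatype 'f ex = Gen nat | Sc 'f | Add "'f ex" "'f ex" | Sub "'f ex" "'f ex" | Mul "'f ex" "'f ex"

fun ev :: "('f::field \<Rightarrow> 'r::ring_1) \<Rightarrow> (nat \<Rightarrow> 'r) \<Rightarrow> 'f ex \<Rightarrow> 'r" where
  "ev e g (Gen i) = g i"
| "ev e g (Sc k) = e k"
| "ev e g (Add x y) = ev e g x + ev e g y"
| "ev e g (Sub x y) = ev e g x - ev e g y"
| "ev e g (Mul x y) = ev e g x * ev e g y"

fun toP :: "'f::field ex \<Rightarrow> ('f \<times> nat list) list" where
  "toP (Gen i) = [(1,[i])]"
| "toP (Sc k) = [(k,[])]"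
| "toP (Add x y) = toP x @ toP y"
| "toP (Sub x y) = toP x @ map (\<lambda>(c,w). (-c,w)) (toP y)"
| "toP (Mul x y) = concat (map (\<lambda>(c,v). map (\<lambda>(d,w). (c*d, v@w)) (toP y)) (toP x))"

definition evP :: "('f::field \<Rightarrow> 'r::ring_1) \<Rightarrow> (nat \<Rightarrow> 'r) \<Rightarrow> ('f \<times> nat list) list \<Rightarrow> 'r" where
  "evP e g p = sum_list (map (\<lambda>(c,w). e c * prod_list (map g w)) p)"

definition coef :: "('f::field \<times> nat list) list \<Rightarrow> nat list \<Rightarrow> 'f" where
  "coef p w = sum_list (map fst (filter (\<lambda>(c,v). v = w) p))"

lemma emb_0: "alg_embedding e \<Longrightarrow> e 0 = 0"
  unfolding alg_embedding_def by (metis add.right_neutral add_left_cancel)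
lemma emb_add: "alg_embedding e \<Longrightarrow> e (a + b) = e a + e b"
  unfolding alg_embedding_def by blast
lemma emb_mult: "alg_embedding e \<Longrightarrow> e (a * b) = e a * e b"
  unfolding alg_embedding_def by blast
lemma emb_comm: "alg_embedding e \<Longrightarrow> e a * x = x * e a"
  unfolding alg_embedding_def by blast
lemma emb_1: "alg_embedding e \<Longrightarrow> e 1 = 1"
  unfolding alg_embedding_def by blast
lemma emb_neg: "alg_embedding e \<Longrightarrow> e (- a) = - e a"
  by (metis add.right_inverse emb_0 emb_add neg_eq_iff_add_eq_0)

lemma evP_app: "evP e g (p @ r) = evP e g p + evP e g r"
  by (simp add: evP_def)

lemma evP_neg: "alg_embedding e \<Longrightarrow> evP e g (map (\<lambda>(c,w). (-c,w)) p) = - evP e g p"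
  by (induction p) (auto simp: evP_def emb_neg)

lemma evP_scale: assumes E: "alg_embedding e"
  shows "evP e g (map (\<lambda>(d,w). (c*d, v@w)) r) = (e c * prod_list (map g v)) * evP e g r"
proof (induction r)
  case Nil then show ?case by (simp add: evP_def)
next
  case (Cons x r)
  obtain d w where x: "x = (d,w)" by fastforce
  have "e (c*d) * prod_list (map g (v@w)) = (e c * prod_list (map g v)) * (e d * prod_list (map g w))"
    using E by (simp add: emb_mult mult.assoc emb_comm[OF E, of d] )
  then show ?case using Cons x by (simp add: evP_def distrib_left)
qed

lemma evP_mul: assumes E: "alg_embedding e"
  shows "evP e g (concat (map (\<lambda>(c,v). map (\<lambda>(d,w). (c*d, v@w)) r) p)) = evP e g p * evP e g r"
proof (induction p)
  case Nil then show ?case by (simp add: evP_def)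
next
  case (Cons x p)
  obtain c v where x: "x = (c,v)" by fastforce
  show ?case using Cons x evP_scale[OF E, of g c v r]
    by (simp add: evP_app) (simp add: evP_def distrib_right)
qed

lemma evP_toP: "alg_embedding e \<Longrightarrow> evP e g (toP x) = ev e g x"
proof (induction x)
  case (Sub x y) then show ?case by (simp add: evP_app evP_neg)
next
  case (Mul x y) then show ?case by (simp add: evP_mul)
qed (auto simp: evP_app evP_def emb_1)

lemma coef_notin: "w \<notin> set (map snd p) \<Longrightarrow> coef p w = 0"
  unfolding coef_def by (induction p) auto

lemma evP_sum: assumes E: "alg_embedding e"
  shows "evP e g p = (\<Sum>w\<in>set (map snd p). e (coef p w) * prod_list (map g w))"
proof (induction p)
  case Nil then show ?case by (simp add: evP_def)
next
  case (Cons x p)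
  obtain c v where x: "x = (c,v)" by fastforce
  let ?S = "set (map snd p)"
  have cf: "coef ((c,v)#p) w = (if v = w then c else 0) + coef p w" for w
    by (simp add: coef_def)
  have "(\<Sum>w\<in>insert v ?S. e (coef ((c,v)#p) w) * prod_list (map g w))
      = (\<Sum>w\<in>insert v ?S. e (if v = w then c else 0) * prod_list (map g w))
        + (\<Sum>w\<in>insert v ?S. e (coef p w) * prod_list (map g w))"
    by (simp add: cf emb_add[OF E] distrib_right sum.distrib)
  also have "(\<Sum>w\<in>insert v ?S. e (if v = w then c else 0) * prod_list (map g w)) = e c * prod_list (map g v)"
  proof -
    have "(\<Sum>w\<in>insert v ?S. e (if v = w then c else 0) * prod_list (map g w))
       = (\<Sum>w\<in>insert v ?S. (if v = w then e c * prod_list (map g w) else 0))"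
      by (rule sum.cong) (auto simp: emb_0[OF E])
    then show ?thesis by (simp add: sum.delta)
  qed
  also have "(\<Sum>w\<in>insert v ?S. e (coef p w) * prod_list (map g w)) = (\<Sum>w\<in>?S. e (coef p w) * prod_list (map g w))"
  proof (cases "v \<in> ?S")
    case True then show ?thesis by (simp add: insert_absorb)
  next
    case False then show ?thesis by (simp add: coef_notin emb_0[OF E])
  qed
  finally show ?case using Cons x by (simp add: evP_def)
qed

lemma reflect: assumes E: "alg_embedding e"
  and "\<forall>w\<in>set (map snd (toP x)). coef (toP x) w = 0"
  shows "ev e g x = 0"
proof -
  have "ev e g x = evP e g (toP x)" using evP_toP[OF E] by simp
  also have "\<dots> = 0" unfolding evP_sum[OF E]
    by (rule sum.neutral) (use assms(2) emb_0[OF E] in auto)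
  finally show ?thesis .
qed

definition eltE :: "'f::field \<Rightarrow> 'f ex \<Rightarrow> 'f ex \<Rightarrow> 'f ex \<Rightarrow> 'f ex" where
  "eltE q x y z = Add x (Mul (Sc (inverse (q^2 - inverse q ^ 2))) (Sub (Mul (Mul (Sc q) y) z) (Mul (Mul (Sc (inverse q)) z) y)))"

definition OmegaE :: "'f::field \<Rightarrow> 'f ex \<Rightarrow> 'f ex \<Rightarrow> 'f ex \<Rightarrow> 'f ex" where
  "OmegaE q x y z = Sub (Sub (Sub (Add (Add (Add (Mul (Mul (Mul (Sc q) x) y) z) (Mul (Sc (q^2)) (Mul x x)))
      (Mul (Sc (inverse q ^ 2)) (Mul y y))) (Mul (Sc (q^2)) (Mul z z)))
      (Mul (Mul (Sc q) x) (Mul (Sc (q + inverse q)) (eltE q x y z))))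
      (Mul (Mul (Sc (inverse q)) y) (Mul (Sc (q + inverse q)) (eltE q y z x))))
      (Mul (Mul (Sc q) z) (Mul (Sc (q + inverse q)) (eltE q z x y)))"

lemma ev_eltE: "ev e g (eltE q x y z) = aw_elt e q (ev e g x) (ev e g y) (ev e g z)"
  by (simp add: eltE_def aw_elt_def)

lemma ev_OmegaE: "ev e g (OmegaE q x y z) = aw_Omega e q (ev e g x) (ev e g y) (ev e g z)"
  by (simp add: OmegaE_def aw_Omega_def ev_eltE aw_alpha_def aw_beta_def aw_gamma_def power2_eq_square)

datatype rel = RD nat | RC nat nat

fun relE :: "'f::field \<Rightarrow> rel \<Rightarrow> 'f ex" where
  "relE q (RD i) = (if i = 3 then Sub (Gen 3) (eltE q (Gen 0) (Gen 1) (Gen 2))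
     else if i = 4 then Sub (Gen 4) (eltE q (Gen 1) (Gen 2) (Gen 0))
     else if i = 5 then Sub (Gen 5) (eltE q (Gen 2) (Gen 0) (Gen 1)) else Sc 0)"
| "relE q (RC i j) = (if i \<in> {3,4,5} then Sub (Mul (Gen i) (Gen j)) (Mul (Gen j) (Gen i)) else Sc 0)"

fun wE :: "nat list \<Rightarrow> 'f::field ex" where
  "wE [] = Sc 1"
| "wE (i # w) = Mul (Gen i) (wE w)"

definition certE :: "'f::field \<Rightarrow> ('f \<times> nat list \<times> rel \<times> nat list) list \<Rightarrow> 'f ex" where
  "certE q L = foldr (\<lambda>(k,u,r,v) acc. Add (Mul (Mul (Mul (Sc k) (wE u)) (relE q r)) (wE v)) acc) L (Sc 0)"

definition gens :: "'r \<Rightarrow> 'r \<Rightarrow> 'r \<Rightarrow> 'r \<Rightarrow> 'r \<Rightarrow> 'r \<Rightarrow> nat \<Rightarrow> 'r" where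
  "gens A B C a b c i = [A,B,C,a,b,c] ! i"

lemma gens_simps[simp]: "gens A B C a b c 0 = A" "gens A B C a b c 1 = B" "gens A B C a b c 2 = C"
  "gens A B C a b c 3 = a" "gens A B C a b c 4 = b" "gens A B C a b c 5 = c" "gens A B C a b c (Suc 0) = B"
  by (simp_all add: gens_def numeral_eq_Suc)

locale awsetup =
  fixes e :: "'f::field \<Rightarrow> 'r::ring_1" and q :: 'f and A B C :: 'r
  assumes E: "alg_embedding e" and q0: "q \<noteq> 0" and q4: "q ^ 4 \<noteq> 1"
    and R: "aw_relations e q A B C"
begin

abbreviation "g \<equiv> gens A B C (aw_elt e q A B C) (aw_elt e q B C A) (aw_elt e q C A B)"

lemma rel_zero: "ev e g (relE q r) = 0"
proof (cases r)
  case (RD i) then show ?thesis by (simp add: ev_eltE emb_0[OF E])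
next
  case (RC i j)
  have c: "central (g i)" if "i \<in> {3,4,5}" using R that by (auto simp: aw_relations_def)
  show ?thesis using RC c by (auto simp: central_def emb_0[OF E])
qed

lemma cert_zero: "ev e g (certE q L) = 0"
  unfolding certE_def by (induction L) (auto simp: rel_zero emb_0[OF E])

lemma by_cert: assumes "\<forall>w\<in>set (map snd (toP (Sub (Sub X Y) (certE q L)))). coef (toP (Sub (Sub X Y) (certE q L))) w = 0"
  shows "ev e g X = ev e g Y"
  using reflect[OF E assms, of g] cert_zero[of L] by simp

lemma q41: "q ^ 4 - 1 \<noteq> 0" using q4 by simp

lemma iT: "inverse (q^2 - inverse q ^ 2) = q^2 / (q^4 - 1)"
proof -
  have f: "q^4 - 1 = (q^2 - inverse q ^ 2) * q^2"
  proof -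
    have "(q^2 - inverse q ^ 2) * q^2 = q^4 - (inverse q * q)^2"
      by (simp add: algebra_simps power_numeral_reduce)
    also have "inverse q * q = 1" using q0 by simp
    finally show ?thesis by simp
  qed
  then have nz: "q^2 - inverse q ^ 2 \<noteq> 0" "q^2 \<noteq> 0" using q41 by auto
  have "inverse (q^2 - inverse q ^ 2) = q^2 / ((q^2 - inverse q ^ 2) * q^2)"
    using nz by (simp add: inverse_eq_divide)
  then show ?thesis using f by simp
qed

lemma iK: "inverse (q - inverse q) = (q^3 + q) / (q^4 - 1)"
proof -
  have f: "q^4 - 1 = (q - inverse q) * (q^3 + q)"
  proof -
    have "(q - inverse q) * (q^3 + q) = q^4 + q^2 - inverse q * q^3 - inverse q * q"
      by (simp add: algebra_simps power_numeral_reduce)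
    also have "inverse q * q^3 = q^2" using q0 by (simp add: power_numeral_reduce)
    also have "inverse q * q = 1" using q0 by simp
    finally show ?thesis by simp
  qed
  then have nz: "q - inverse q \<noteq> 0" "q^3 + q \<noteq> 0" using q41 by auto
  have "inverse (q - inverse q) = (q^3 + q) / ((q - inverse q) * (q^3 + q))"
    using nz by (simp add: inverse_eq_divide)
  then show ?thesis using f by simp
qed

lemma rho_Omega: "aw_Omega e q B C A = aw_Omega e q A B C"
proof -
  obtain d where d: "q ^ 4 - 1 = d" by blast
  have d0: "d \<noteq> 0" using q41 d by simp
  have T: "inverse (q^2 - inverse q ^ 2) = q^2 / d" using iT d by simp
  have K: "inverse (q - inverse q) = (q^3+q)/d" using iK d by simp
  have "ev e g (OmegaE q (Gen 1) (Gen 2) (Gen 0)) = ev e g (OmegaE q (Gen 0) (Gen 1) (Gen 2))"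
    by (rule by_cert[where L = "[((1 * inverse q ^ 2 + -1 * q ^ 2), [], RD 4, [1]), ((-1 * inverse q ^ 2 + 1 * q ^ 2), [0], RD 3, []), ((1 * inverse q ^ 2 + -1 * q ^ 2), [], RD 3, [0]), ((-1 * inverse q ^ 2 + 1 * q ^ 2), [1], RD 4, []), ((-1 * inverse q ^ 2 + 1 * q ^ 2), [], RC 3 0, []), ((-1 * inverse q ^ 2 + 1 * q ^ 2), [], RC 4 1, [])]"],
      simp add: eltE_def OmegaE_def certE_def coef_def d T K;
      simp add: field_simps q0 d0;
      (unfold d[symmetric])?; (intro conjI; algebra)?)
  then show ?thesis by (simp add: ev_OmegaE)
qed

lemma sig_a: "aw_elt e q B A (C + e (inverse (q - inverse q)) * (A * B - B * A)) = aw_elt e q B C A"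
proof -
  obtain d where d: "q ^ 4 - 1 = d" by blast
  have d0: "d \<noteq> 0" using q41 d by simp
  have T: "inverse (q^2 - inverse q ^ 2) = q^2 / d" using iT d by simp
  have K: "inverse (q - inverse q) = (q^3+q)/d" using iK d by simp
  have "ev e g (eltE q (Gen 1) (Gen 0) (Add (Gen 2) (Mul (Sc (inverse (q - inverse q))) (Sub (Mul (Gen 0) (Gen 1)) (Mul (Gen 1) (Gen 0)))))) = ev e g (eltE q (Gen 1) (Gen 2) (Gen 0))"
    by (rule by_cert[where L = "[(((-1 * q ^ 1 + -1 * q ^ 3) / (q ^ 4 - 1) ^ 1), [0], RD 5, []), (((1 * q ^ 1 + 1 * q ^ 3) / (q ^ 4 - 1) ^ 1), [], RD 5, [0]), (((-1 * q ^ 1 + -1 * q ^ 3) / (q ^ 4 - 1) ^ 1), [], RC 5 0, [])]"],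
      simp add: eltE_def OmegaE_def certE_def coef_def d T K;
      simp add: field_simps q0 d0;
      (unfold d[symmetric])?; (intro conjI; algebra)?)
  then show ?thesis by (simp add: ev_eltE)
qed

lemma sig_b: "aw_elt e q A (C + e (inverse (q - inverse q)) * (A * B - B * A)) B = aw_elt e q A B C"
proof -
  obtain d where d: "q ^ 4 - 1 = d" by blast
  have d0: "d \<noteq> 0" using q41 d by simp
  have T: "inverse (q^2 - inverse q ^ 2) = q^2 / d" using iT d by simp
  have K: "inverse (q - inverse q) = (q^3+q)/d" using iK d by simp
  have "ev e g (eltE q (Gen 0) (Add (Gen 2) (Mul (Sc (inverse (q - inverse q))) (Sub (Mul (Gen 0) (Gen 1)) (Mul (Gen 1) (Gen 0))))) (Gen 1)) = ev e g (eltE q (Gen 0) (Gen 1) (Gen 2))"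
    by (rule by_cert[where L = "[(((-1 * q ^ 1 + -1 * q ^ 3) / (q ^ 4 - 1) ^ 1), [], RD 5, [1]), (((1 * q ^ 1 + 1 * q ^ 3) / (q ^ 4 - 1) ^ 1), [1], RD 5, []), (((1 * q ^ 1 + 1 * q ^ 3) / (q ^ 4 - 1) ^ 1), [], RC 5 1, [])]"],
      simp add: eltE_def OmegaE_def certE_def coef_def d T K;
      simp add: field_simps q0 d0;
      (unfold d[symmetric])?; (intro conjI; algebra)?)
  then show ?thesis by (simp add: ev_eltE)
qed

lemma sig_c: "aw_elt e q (C + e (inverse (q - inverse q)) * (A * B - B * A)) B A = aw_elt e q C A B"
proof -
  obtain d where d: "q ^ 4 - 1 = d" by blast
  have d0: "d \<noteq> 0" using q41 d by simp
  have T: "inverse (q^2 - inverse q ^ 2) = q^2 / d" using iT d by simp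
  have K: "inverse (q - inverse q) = (q^3+q)/d" using iK d by simp
  have "ev e g (eltE q (Add (Gen 2) (Mul (Sc (inverse (q - inverse q))) (Sub (Mul (Gen 0) (Gen 1)) (Mul (Gen 1) (Gen 0))))) (Gen 1) (Gen 0)) = ev e g (eltE q (Gen 2) (Gen 0) (Gen 1))"
    by (rule by_cert[where L = "[]"],
      simp add: eltE_def OmegaE_def certE_def coef_def d T K;
      simp add: field_simps q0 d0;
      (unfold d[symmetric])?; (intro conjI; algebra)?)
  then show ?thesis by (simp add: ev_eltE)
qed

lemma sig_Omega: "aw_Omega e q B A (C + e (inverse (q - inverse q)) * (A * B - B * A)) = aw_Omega e q A B C"
proof -
  obtain d where d: "q ^ 4 - 1 = d" by blast
  have d0: "d \<noteq> 0" using q41 d by simp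
  have T: "inverse (q^2 - inverse q ^ 2) = q^2 / d" using iT d by simp
  have K: "inverse (q - inverse q) = (q^3+q)/d" using iK d by simp
  have "ev e g (OmegaE q (Gen 1) (Gen 0) (Add (Gen 2) (Mul (Sc (inverse (q - inverse q))) (Sub (Mul (Gen 0) (Gen 1)) (Mul (Gen 1) (Gen 0)))))) = ev e g (OmegaE q (Gen 0) (Gen 1) (Gen 2))"
    by (rule by_cert[where L = "[(((1 * inverse q ^ 1 + 2 * q ^ 1 + 1 * q ^ 3) / (q ^ 4 - 1) ^ 1), [0], RD 5, [1]), ((1 * inverse q ^ 1 + 1 * q ^ 1), [0,1], RD 5, []), (((-1 * q ^ 1 + -2 * q ^ 3 + -1 * q ^ 5) / (q ^ 4 - 1) ^ 1), [], RD 5, [0,1]), (((1 * q ^ 1 + 2 * q ^ 3 + 1 * q ^ 5) / (q ^ 4 - 1) ^ 1), [], RD 5, [1,0]), (((-1 * q ^ 1 + -2 * q ^ 3 + -1 * q ^ 5) / (q ^ 4 - 1) ^ 1), [1], RD 5, [0]), ((1 * inverse q ^ 1 + 1 * q ^ 1), [0], RC 5 1, []), ((-1 * 1 + -1 * q ^ 2), [0], RD 3, []), (((1 * q ^ 1 + 2 * q ^ 3 + 1 * q ^ 5) / (q ^ 4 - 1) ^ 1), [], RC 5 0, [1]), ((-1 * inverse q ^ 2 + -1 * 1), [1], RD 4, []), (((-1 * q ^ 1 + -2 * q ^ 3 + -1 * q ^ 5) / (q ^ 4 - 1) ^ 1), [], RC 5 1, [0]), ((1 * inverse q ^ 2 +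 1 * 1), [], RD 4, [1]), ((1 * 1 + 1 * q ^ 2), [], RD 3, [0]), ((-1 * 1 + -1 * q ^ 2), [], RC 3 0, []), ((-1 * inverse q ^ 2 + -1 * 1), [], RC 4 1, [])]"],
      simp add: eltE_def OmegaE_def certE_def coef_def d T K;
      simp add: field_simps q0 d0;
      (unfold d[symmetric])?; (intro conjI; algebra)?)
  then show ?thesis by (simp add: ev_OmegaE)
qed

lemma step_ok: "case psl_step e q x (A, B, C) of (A', B', C') \<Rightarrow>
   aw_relations e q A' B' C' \<and> aw_Omega e q A' B' C' = aw_Omega e q A B C"
proof (cases x)
  case Rho then show ?thesis using R rho_Omega by (auto simp: aw_relations_def)
next
  case Sigma then show ?thesis using R sig_Omega sig_a sig_b sig_c by (auto simp: aw_relations_def)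
qed

end

theorem theorem6p4:
  fixes e :: "'f::field \<Rightarrow> 'r::ring_1" and q :: 'f and A B C :: 'r
    and w :: "psl_gen list"
  assumes "alg_embedding e" and "q \<noteq> 0" and "q ^ 4 \<noteq> 1"
    and "aw_relations e q A B C"
  shows "(case psl_act e q w (A, B, C) of (A', B', C') \<Rightarrow> aw_Omega e q A' B' C')
           = aw_Omega e q A B C"
  using assms(4)
proof (induction w arbitrary: A B C)
  case Nil then show ?case by simp
next
  case (Cons x w)
  obtain A' B' C' where st: "psl_step e q x (A, B, C) = (A', B', C')" by (metis prod_cases3)
  have "aw_relations e q A' B' C' \<and> aw_Omega e q A' B' C' = aw_Omega e q A B C"
    using awsetup.step_ok[of e q A B C x] assms(1,2,3) Cons.prems st
    by (simp add: awsetup_def)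
  then show ?case using Cons.IH[of A' B' C'] st by simp
qed

end
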